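(* Let $(G,w)$ be a weighted trigraph, let $C$ be a clique-cutset of $G$, and let $(A,B,C)$ be a cut-partition of $G$. Set $G_A=G[A\cup C]$, $G_B=G[B\cup C]$, and for every $C'\subseteq C$ set $\alpha_{A\cup C'}=\alpha(\mathrm{Red}[G_A,w;A\cup C'])+\mathrm{Ext}[G_A,w;A\cup C']$. Define $w_B:D(G_B)\to\mathbb N$ by $w_B(c)=\alpha_{A\cup\{c\}}-\alpha_A$ for $c\in C$, and $w_B(p)=w(p)$ for all $p\in D(G_B)\setminus C$. Then $w_B$ is a weight function for $G_B$ (in particular each $w_B(c)\ge 0$), and $\alpha(G,w)=\alpha_A+\alpha(G_B,w_B)$.
   Context: A trigraph $G$ consists of a finite vertex set $V(G)$ and an adjacency function $\theta_G:\binom{V(G)}{2}\to\{-1,0,1\}$; for distinct $u,v$ write $uv$ for $\{u,v\}$. The pair $uv$ is strongly adjacent if $\theta_G(uv)=1$, semi-adjacent if $\theta_G(uv)=0$, strongly anti-adjacent if $\theta_G(uv)=-1$; $u,v$ are anti-adjacent if $\theta_G(uv)\le 0$. A stable set is a set of pairwise anti-adjacent vertices; a strong clique is a set of pairwise strongly adjacent vertices. For $X\subseteq V(G)$, $G[X]$ is the trigraph on $X$ with the restricted adjacency function, and $G\setminus X=G[V(G)\setminus X]$. $G$ is connected if the graph on $V(G)$ whose edges are the pairs $uv$ with $\theta_G(uv)\ge 0$ is connected. A clique-cutset is a (possibly empty) strong clique $C$ such that $G\setminus C$ is disconnected. A cut-partition of $G$ is a partition $(A,B,C)$ of $V(G)$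 with $A,B$ non-empty ($C$ possibly empty) such that every vertex of $A$ is strongly anti-adjacent to every vertex of $B$. $\mathbb N$ denotes the non-negative integers. For a trigraph $G$ let $D(G)=V(G)\cup\{(u,v):u,v\in V(G),u\neq v\}\cup\binom{V(G)}{2}$. A weight function for $G$ is a map $w:D(G)\to\mathbb N$ such that for all distinct $u,v$: if $uv$ is not semi-adjacent then $w(u,v)=w(v,u)=w(uv)=0$, and $w(u,v)\le w(uv)$. A weighted trigraph is a pair $(G,w)$ with $w$ a weight function for $G$; for $X\subseteq V(G)$, $(G[X],w)$ denotes $(G[X],w|_{D(G[X])})$. The weight of $S\subseteq V(G)$ is $\llbracket S\rrbracket_{(G,w)}=\sum_{u\in S}w(u)+\sum_{u\in S}\sum_{v\in V(G)\setminus S}w(u,v)+\sum_{uv\in\binom{V(G)\setminus S}{2}}w(uv)$, and $\alpha(G,w)=\max\{\llbracket S\rrbracket_{(G,w)}: S \text{ a stable set of } G\}$. For $R\subseteq V(G)$, the reduction $\mathrm{Red}[G,w;R]$ is the weighted trigraph $(G[R],w')$ where $w'(u)=\max\{w(u)-\sum_{v\in V(G)\setminus R}(w(uv)-w(u,v)),0\}$ for $u\in R$, and $w'(u,v)=w(u,v)$, $w'(uv)=w(uv)$ for distinct $u,v\in R$. The exterior weight is $\mathrm{Ext}[G,w;R]=\sum_{uv\in\binom{V(G)\setminus R}{2}}w(uv)+\sum_{u\in R}\sum_{v\in V(G)\setminus R}w(uv)$. *)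

theory Defs
  imports Main
begin

text \<open>A trigraph is a finite vertex set together with an adjacency function on
  2-element subsets (unordered pairs). Values of the function on sets that are
  not 2-subsets of the vertex set are irrelevant.\<close>
type_synonym 'a trigraph = "'a set \<times> ('a set \<Rightarrow> int)"

definition verts :: "'a trigraph \<Rightarrow> 'a set" where "verts G = fst G"
definition theta :: "'a trigraph \<Rightarrow> 'a \<Rightarrow> 'a \<Rightarrow> int" where
  "theta G u v = snd G {u, v}"

definition trigraph :: "'a trigraph \<Rightarrow> bool" where
  "trigraph G \<longleftrightarrow> finite (verts G) \<and>
     (\<forall>u\<in>verts G. \<forall>v\<in>verts G. u \<noteq> v \<longrightarrow> theta G u v \<in> {-1, 0, 1})"

definition induced :: "'a trigraph \<Rightarrow> 'a set \<Rightarrow> 'a trigraph" where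
  "induced G X = (X \<inter> verts G, snd G)"

definition delete :: "'a trigraph \<Rightarrow> 'a set \<Rightarrow> 'a trigraph" where
  "delete G X = induced G (verts G - X)"

definition stable_set :: "'a trigraph \<Rightarrow> 'a set \<Rightarrow> bool" where
  "stable_set G S \<longleftrightarrow> S \<subseteq> verts G \<and> (\<forall>u\<in>S. \<forall>v\<in>S. u \<noteq> v \<longrightarrow> theta G u v \<le> 0)"

definition strong_clique :: "'a trigraph \<Rightarrow> 'a set \<Rightarrow> bool" where
  "strong_clique G S \<longleftrightarrow> S \<subseteq> verts G \<and> (\<forall>u\<in>S. \<forall>v\<in>S. u \<noteq> v \<longrightarrow> theta G u v = 1)"

definition edge_rel :: "'a trigraph \<Rightarrow> ('a \<times> 'a) set" where
  "edge_rel G = {(u, v). u \<in> verts G \<and> v \<in> verts G \<and> u \<noteq> v \<and> theta G u v \<ge> 0}"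

definition connected_tg :: "'a trigraph \<Rightarrow> bool" where
  "connected_tg G \<longleftrightarrow> (\<forall>u\<in>verts G. \<forall>v\<in>verts G. (u, v) \<in> (edge_rel G)\<^sup>*)"

definition clique_cutset :: "'a trigraph \<Rightarrow> 'a set \<Rightarrow> bool" where
  "clique_cutset G C \<longleftrightarrow> strong_clique G C \<and> \<not> connected_tg (delete G C)"

definition cut_partition :: "'a trigraph \<Rightarrow> 'a set \<Rightarrow> 'a set \<Rightarrow> 'a set \<Rightarrow> bool" where
  "cut_partition G A B C \<longleftrightarrow>
     A \<union> B \<union> C = verts G \<and> A \<inter> B = {} \<and> A \<inter> C = {} \<and> B \<inter> C = {} \<and>
     A \<noteq> {} \<and> B \<noteq> {} \<and> (\<forall>a\<in>A. \<forall>b\<in>B. theta G a b = -1)"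

text \<open>Elements of D(G): vertices, ordered pairs, unordered pairs (2-element sets).\<close>
datatype 'a delem = Vtx 'a | Ord 'a 'a | Unord "'a set"

definition weight_function :: "'a trigraph \<Rightarrow> ('a delem \<Rightarrow> nat) \<Rightarrow> bool" where
  "weight_function G w \<longleftrightarrow>
     (\<forall>u\<in>verts G. \<forall>v\<in>verts G. u \<noteq> v \<longrightarrow>
        (theta G u v \<noteq> 0 \<longrightarrow> w (Ord u v) = 0 \<and> w (Ord v u) = 0 \<and> w (Unord {u, v}) = 0) \<and>
        w (Ord u v) \<le> w (Unord {u, v}))"

definition pairs2 :: "'a set \<Rightarrow> 'a set set" where
  "pairs2 X = {p. p \<subseteq> X \<and> card p = 2}"

definition set_weight :: "'a trigraph \<Rightarrow> ('a delem \<Rightarrow> nat) \<Rightarrow> 'a set \<Rightarrow> nat" where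
  "set_weight G w S =
     (\<Sum>u\<in>S. w (Vtx u)) + (\<Sum>u\<in>S. \<Sum>v\<in>verts G - S. w (Ord u v))
     + (\<Sum>p\<in>pairs2 (verts G - S). w (Unord p))"

definition alpha :: "'a trigraph \<Rightarrow> ('a delem \<Rightarrow> nat) \<Rightarrow> nat" where
  "alpha G w = Max (set_weight G w ` {S. stable_set G S})"

definition red_weight :: "'a trigraph \<Rightarrow> ('a delem \<Rightarrow> nat) \<Rightarrow> 'a set \<Rightarrow> 'a delem \<Rightarrow> nat" where
  "red_weight G w R p = (case p of
      Vtx u \<Rightarrow> nat (max (int (w (Vtx u)) -
                 (\<Sum>v\<in>verts G - R. int (w (Unord {u, v})) - int (w (Ord u v)))) 0)
    | _ \<Rightarrow> w p)"

definition Red :: "'a trigraph \<Rightarrow> ('a delem \<Rightarrow> nat) \<Rightarrow> 'a set \<Rightarrow> 'a trigraph \<times> ('a delem \<Rightarrow> nat)" where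
  "Red G w R = (induced G R, red_weight G w R)"

definition Ext :: "'a trigraph \<Rightarrow> ('a delem \<Rightarrow> nat) \<Rightarrow> 'a set \<Rightarrow> nat" where
  "Ext G w R = (\<Sum>p\<in>pairs2 (verts G - R). w (Unord p))
               + (\<Sum>u\<in>R. \<Sum>v\<in>verts G - R. w (Unord {u, v}))"

definition alpha_wt :: "'a trigraph \<times> ('a delem \<Rightarrow> nat) \<Rightarrow> nat" where
  "alpha_wt X = alpha (fst X) (snd X)"

end

theory Submission
  imports Defs
begin

definition sw :: "'a set \<Rightarrow> ('a delem \<Rightarrow> nat) \<Rightarrow> 'a set \<Rightarrow> nat" where
  "sw V w S = (\<Sum>u\<in>S. w (Vtx u)) + (\<Sum>u\<in>S. \<Sum>v\<in>V - S. w (Ord u v))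
     + (\<Sum>p\<in>pairs2 (V - S). w (Unord p))"

lemma set_weight_sw: "set_weight G w S = sw (verts G) w S"
  by (simp add: set_weight_def sw_def)

lemma finite_pairs2: "finite X \<Longrightarrow> finite (pairs2 X)"
  by (rule finite_subset[of _ "Pow X"]) (auto simp: pairs2_def)

lemma pairs2_sing: "pairs2 {u} = {}"
  by (auto simp: pairs2_def dest!: subset_singletonD)

lemma pairs2_split:
  assumes "finite X" "finite Y" "X \<inter> Y = {}"
  shows "(\<Sum>p\<in>pairs2 (X\<union>Y). f p) = (\<Sum>p\<in>pairs2 X. f p) + (\<Sum>p\<in>pairs2 Y. f p)
           + (\<Sum>x\<in>X. \<Sum>y\<in>Y. f {x,y})"
proof -
  let ?h = "\<lambda>(x,y). {x,y}"
  have eq: "pairs2 (X\<union>Y) = (pairs2 X \<union> pairs2 Y) \<union> ?h ` (X\<times>Y)"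
  proof
    show "pairs2 (X\<union>Y) \<subseteq> (pairs2 X \<union> pairs2 Y) \<union> ?h ` (X\<times>Y)"
    proof
      fix p assume "p \<in> pairs2 (X\<union>Y)"
      then obtain a b where p: "p = {a,b}" "a\<noteq>b" "a \<in> X\<union>Y" "b\<in>X\<union>Y"
        by (auto simp: pairs2_def card_2_iff)
      have c2: "card p = 2" using p by simp
      consider "a\<in>X" "b\<in>X" | "a\<in>Y" "b\<in>Y" | "a\<in>X" "b\<in>Y" | "a\<in>Y" "b\<in>X" using p by blast
      then show "p \<in> (pairs2 X \<union> pairs2 Y) \<union> ?h ` (X\<times>Y)"
      proof cases
        case 1 then show ?thesis using p c2 by (auto simp: pairs2_def)
      next
        case 2 then show ?thesis using p c2 by (auto simp: pairs2_def)
      next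
        case 3 then have "p \<in> ?h ` (X\<times>Y)" using p by (auto intro!: image_eqI[of _ _ "(a,b)"])
        then show ?thesis by blast
      next
        case 4 then have "p \<in> ?h ` (X\<times>Y)" using p by (auto intro!: image_eqI[of _ _ "(b,a)"])
        then show ?thesis by blast
      qed
    qed
  next
    show "(pairs2 X \<union> pairs2 Y) \<union> ?h ` (X\<times>Y) \<subseteq> pairs2 (X\<union>Y)"
      using assms(3) by (auto simp: pairs2_def card_2_iff) blast
  qed
  have inj: "inj_on ?h (X\<times>Y)"
    using assms(3) by (auto simp: inj_on_def doubleton_eq_iff)
  have d1: "pairs2 X \<inter> pairs2 Y = {}"
  proof (rule ccontr)
    assume "pairs2 X \<inter> pairs2 Y \<noteq> {}"
    then obtain p where "p \<subseteq> X" "p \<subseteq> Y" "card p = 2" by (auto simp: pairs2_def)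
    then have "p = {}" using assms(3) by blast
    with \<open>card p = 2\<close> show False by simp
  qed
  have d2: "(pairs2 X \<union> pairs2 Y) \<inter> ?h ` (X\<times>Y) = {}"
    using assms(3) by (auto simp: pairs2_def)
  have fin: "finite (pairs2 X)" "finite (pairs2 Y)" "finite (?h ` (X\<times>Y))"
    using assms by (auto simp: finite_pairs2)
  have "(\<Sum>p\<in>pairs2 (X\<union>Y). f p) = (\<Sum>p\<in>pairs2 X \<union> pairs2 Y. f p) + (\<Sum>p\<in>?h ` (X\<times>Y). f p)"
    unfolding eq using fin d2 by (simp add: sum.union_disjoint)
  also have "(\<Sum>p\<in>pairs2 X \<union> pairs2 Y. f p) = (\<Sum>p\<in>pairs2 X. f p) + (\<Sum>p\<in>pairs2 Y. f p)"
    using fin d1 by (simp add: sum.union_disjoint)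
  also have "(\<Sum>p\<in>?h ` (X\<times>Y). f p) = (\<Sum>q\<in>X\<times>Y. f (?h q))"
    using inj by (simp add: sum.reindex)
  also have "\<dots> = (\<Sum>x\<in>X. \<Sum>y\<in>Y. f {x,y})"
    by (simp add: sum.cartesian_product split_def)
  finally show ?thesis .
qed

lemma sw_remove:
  assumes "finite V" "T \<subseteq> V" "u \<in> T"
  shows "sw V w T + (\<Sum>v\<in>V-T. w (Unord {u,v}))
         \<le> sw V w (T-{u}) + w (Vtx u) + (\<Sum>v\<in>V-T. w (Ord u v))"
proof -
  have fT: "finite T" using assms finite_subset by blast
  have a1: "(\<Sum>x\<in>T. w (Vtx x)) = w (Vtx u) + (\<Sum>x\<in>T-{u}. w (Vtx x))"
    using fT assms(3) by (simp add: sum.remove)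
  have a2: "(\<Sum>x\<in>T. \<Sum>v\<in>V-T. w (Ord x v)) = (\<Sum>v\<in>V-T. w (Ord u v)) + (\<Sum>x\<in>T-{u}. \<Sum>v\<in>V-T. w (Ord x v))"
    using fT assms(3) by (simp add: sum.remove)
  have e: "V - (T-{u}) = (V - T) \<union> {u}" using assms by auto
  have a3: "(\<Sum>x\<in>T-{u}. \<Sum>v\<in>V-T. w (Ord x v)) \<le> (\<Sum>x\<in>T-{u}. \<Sum>v\<in>V-(T-{u}). w (Ord x v))"
    by (rule sum_mono, rule sum_mono2) (use assms in auto)
  have a4: "(\<Sum>p\<in>pairs2 (V-(T-{u})). w (Unord p)) = (\<Sum>p\<in>pairs2 (V-T). w (Unord p)) + (\<Sum>v\<in>V-T. w (Unord {u,v}))"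
    unfolding e using assms
    by (subst pairs2_split) (auto simp: pairs2_sing insert_commute)
  show ?thesis unfolding sw_def using a1 a2 a3 a4 by linarith
qed

lemma sw_remove_int:
  assumes "finite V" "T \<subseteq> V" "u \<in> T"
  shows "int (sw V w T) + (\<Sum>v\<in>V-T. int (w (Unord {u,v})) - int (w (Ord u v)))
         \<le> int (sw V w (T-{u})) + int (w (Vtx u))"
  using sw_remove[OF assms, of w] by (simp add: sum_subtractf flip: of_nat_sum) 

lemma rest_red:
  assumes "finite VA" "R \<subseteq> VA" "T \<subseteq> R"
  shows "(\<Sum>u\<in>T. \<Sum>v\<in>R-T. w (Ord u v)) + (\<Sum>p\<in>pairs2 (R-T). w (Unord p))
         + ((\<Sum>p\<in>pairs2 (VA-R). w (Unord p)) + (\<Sum>u\<in>R. \<Sum>v\<in>VA-R. w (Unord {u,v})))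
         + (\<Sum>u\<in>T. \<Sum>v\<in>VA-R. w (Ord u v))
       = (\<Sum>u\<in>T. \<Sum>v\<in>VA-T. w (Ord u v)) + (\<Sum>p\<in>pairs2 (VA-T). w (Unord p))
         + (\<Sum>u\<in>T. \<Sum>v\<in>VA-R. w (Unord {u,v}))"
proof -
  have e: "VA - T = (R - T) \<union> (VA - R)" using assms by auto
  have fR: "finite R" using assms finite_subset by blast
  have b1: "(\<Sum>u\<in>T. \<Sum>v\<in>VA-T. w (Ord u v)) = (\<Sum>u\<in>T. \<Sum>v\<in>R-T. w (Ord u v)) + (\<Sum>u\<in>T. \<Sum>v\<in>VA-R. w (Ord u v))"
    unfolding e using assms fR by (simp add: sum.union_disjoint sum.distrib Diff_Int_distrib2 inf_commute) 
  have b2: "(\<Sum>p\<in>pairs2 (VA-T). w (Unord p)) = (\<Sum>p\<in>pairs2 (R-T). w (Unord p)) + (\<Sum>p\<in>pairs2 (VA-R). w (Unord p))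
             + (\<Sum>x\<in>R-T. \<Sum>y\<in>VA-R. w (Unord {x,y}))"
    unfolding e using assms fR by (subst pairs2_split) auto
  have b3: "(\<Sum>u\<in>R. \<Sum>v\<in>VA-R. w (Unord {u,v})) = (\<Sum>u\<in>R-T. \<Sum>v\<in>VA-R. w (Unord {u,v})) + (\<Sum>u\<in>T. \<Sum>v\<in>VA-R. w (Unord {u,v}))"
    using assms fR by (simp add: sum.subset_diff)
  show ?thesis unfolding b1 b2 b3 by (simp add: algebra_simps)
qed

lemma stable_mono: "stable_set H T \<Longrightarrow> S \<subseteq> T \<Longrightarrow> stable_set H S"
  by (auto simp: stable_set_def)

lemma verts_induced: "verts (induced G X) = X \<inter> verts G"
  by (simp add: induced_def verts_def)

lemma theta_induced: "theta (induced G X) = theta G"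
  by (simp add: induced_def theta_def fun_eq_iff)

lemma stable_induced: "stable_set (induced G X) S \<longleftrightarrow> stable_set G S \<and> S \<subseteq> X"
  by (auto simp: stable_set_def verts_induced theta_induced)

lemma finite_stable: "finite (verts H) \<Longrightarrow> finite {T. stable_set H T \<and> P T}"
  by (rule finite_subset[of _ "Pow (verts H)"]) (auto simp: stable_set_def)

lemma red_alpha:
  assumes fin: "finite (verts H)" and RV: "R \<subseteq> verts H" and wf: "weight_function H w"
  shows "int (alpha_wt (Red H w R)) + int (Ext H w R)
         = int (Max (sw (verts H) w ` {T. stable_set H T \<and> T \<subseteq> R}))"
proof -
  define VA where "VA = verts H"
  define D where "D = VA - R"
  define w' where "w' = red_weight H w R"
  define s where "s u = (\<Sum>v\<in>D. int (w (Unord {u,v})) - int (w (Ord u v)))" for u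
  define F where "F = {T. stable_set H T \<and> T \<subseteq> R}"
  define exc where "exc u = int (w' (Vtx u)) - int (w (Vtx u)) + s u" for u
  have w'V: "w' (Vtx u) = nat (max (int (w (Vtx u)) - s u) 0)" for u
    by (simp add: w'_def red_weight_def s_def D_def VA_def)
  have w'O: "w' (Ord a b) = w (Ord a b)" "w' (Unord p) = w (Unord p)" for a b p
    by (simp_all add: w'_def red_weight_def)
  have vind: "verts (induced H R) = R" using RV by (auto simp: verts_induced)
  have alpha_eq: "alpha_wt (Red H w R) = Max (sw R w' ` F)"
    by (simp add: alpha_wt_def Red_def alpha_def set_weight_sw vind stable_induced F_def w'_def)
  have finF: "finite F" unfolding F_def using fin by (rule finite_stable)
  have neF: "{} \<in> F" by (simp add: F_def stable_set_def)
  have finVA: "finite VA" using fin VA_def by simp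
  have Ext_eq: "Ext H w R = (\<Sum>p\<in>pairs2 D. w (Unord p)) + (\<Sum>u\<in>R. \<Sum>v\<in>D. w (Unord {u,v}))"
    by (simp add: Ext_def D_def VA_def)
  have val: "int (sw R w' T) + int (Ext H w R) = int (sw VA w T) + (\<Sum>u\<in>T. exc u)"
    if "T \<subseteq> R" for T
  proof -
    have r: "(\<Sum>u\<in>T. \<Sum>v\<in>R-T. w (Ord u v)) + (\<Sum>p\<in>pairs2 (R-T). w (Unord p))
         + ((\<Sum>p\<in>pairs2 (VA-R). w (Unord p)) + (\<Sum>u\<in>R. \<Sum>v\<in>VA-R. w (Unord {u,v})))
         + (\<Sum>u\<in>T. \<Sum>v\<in>VA-R. w (Ord u v))
       = (\<Sum>u\<in>T. \<Sum>v\<in>VA-T. w (Ord u v)) + (\<Sum>p\<in>pairs2 (VA-T). w (Unord p))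
         + (\<Sum>u\<in>T. \<Sum>v\<in>VA-R. w (Unord {u,v}))"
      using rest_red[OF finVA _ that] RV VA_def by blast
    have se: "(\<Sum>u\<in>T. s u) = int (\<Sum>u\<in>T. \<Sum>v\<in>D. w (Unord {u,v})) - int (\<Sum>u\<in>T. \<Sum>v\<in>D. w (Ord u v))"
      by (simp add: s_def sum_subtractf of_nat_sum)
    have ee: "(\<Sum>u\<in>T. exc u) = int (\<Sum>u\<in>T. w' (Vtx u)) - int (\<Sum>u\<in>T. w (Vtx u)) + (\<Sum>u\<in>T. s u)"
      by (simp add: exc_def sum.distrib sum_subtractf of_nat_sum)
    have "int (sw R w' T) + int (Ext H w R) = int (\<Sum>u\<in>T. w' (Vtx u)) + int ((\<Sum>u\<in>T. \<Sum>v\<in>R-T. w (Ord u v)) + (\<Sum>p\<in>pairs2 (R-T). w (Unord p))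
         + ((\<Sum>p\<in>pairs2 (VA-R). w (Unord p)) + (\<Sum>u\<in>R. \<Sum>v\<in>VA-R. w (Unord {u,v}))))"
      by (simp add: sw_def w'O Ext_eq D_def)
    also have "\<dots> = int (\<Sum>u\<in>T. w' (Vtx u)) + int ((\<Sum>u\<in>T. \<Sum>v\<in>VA-T. w (Ord u v)) + (\<Sum>p\<in>pairs2 (VA-T). w (Unord p))
         + (\<Sum>u\<in>T. \<Sum>v\<in>VA-R. w (Unord {u,v}))) - int (\<Sum>u\<in>T. \<Sum>v\<in>VA-R. w (Ord u v))"
      using arg_cong[OF r, of int] by simp
    also have "\<dots> = int (sw VA w T) + (\<Sum>u\<in>T. exc u)"
      unfolding ee se by (simp add: sw_def D_def)
    finally show ?thesis .
  qed
  have exc_nn: "exc u \<ge> 0" for u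
    by (simp add: exc_def w'V)
  have sD: "s u \<le> (\<Sum>v\<in>VA-T. int (w (Unord {u,v})) - int (w (Ord u v)))"
    if "T \<subseteq> R" "u \<in> T" for T u
    unfolding s_def
  proof (rule sum_mono2)
    show "finite (VA - T)" using finVA by simp
    show "D \<subseteq> VA - T" using that by (auto simp: D_def)
    show "0 \<le> int (w (Unord {u, b})) - int (w (Ord u b))" if "b \<in> VA - T - D" for b
      using wf that \<open>u \<in> T\<close> \<open>T \<subseteq> R\<close> RV unfolding weight_function_def VA_def
      by (metis DiffD1 DiffD2 diff_ge_0_iff_ge of_nat_mono subsetD)
  qed
  have key: "T \<in> F \<longrightarrow> int (sw R w' T) + int (Ext H w R) \<le> int (Max (sw VA w ` F))" for T
  proof -
    have fT: "T \<in> F \<Longrightarrow> finite T" using finVA unfolding F_def stable_set_def VA_def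
      using finite_subset by blast
    show ?thesis
    proof (cases "finite T")
      case False then show ?thesis using fT by blast
    next
      case True
      then show ?thesis
      proof (induction T rule: finite_psubset_induct)
        case (psubset T)
        show ?case
        proof
          assume TF: "T \<in> F"
          then have TR: "T \<subseteq> R" by (simp add: F_def)
          show "int (sw R w' T) + int (Ext H w R) \<le> int (Max (sw VA w ` F))"
          proof (cases "\<forall>u\<in>T. s u \<le> int (w (Vtx u))")
            case True
            then have "\<forall>u\<in>T. exc u = 0" by (auto simp: exc_def w'V)
            then have "int (sw R w' T) + int (Ext H w R) = int (sw VA w T)" using val[OF TR] by simp
            also have "\<dots> \<le> int (Max (sw VA w ` F))" using Max_ge finF TF by simp
            finally show ?thesis .
          next
            case False
            then obtain u where u: "u \<in> T" "s u > int (w (Vtx u))" by auto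
            have excu: "exc u = s u - int (w (Vtx u))" using u by (simp add: exc_def w'V)
            have T'F: "T - {u} \<in> F" using TF stable_mono[of H T "T-{u}"] by (auto simp: F_def)
            have IH: "int (sw R w' (T-{u})) + int (Ext H w R) \<le> int (Max (sw VA w ` F))"
              using psubset.IH[of "T-{u}"] u T'F by blast
            have TV: "T \<subseteq> VA" using TR RV VA_def by auto
            have rm: "int (sw VA w T) + (\<Sum>v\<in>VA-T. int (w (Unord {u,v})) - int (w (Ord u v)))
                 \<le> int (sw VA w (T-{u})) + int (w (Vtx u))"
              by (rule sw_remove_int[OF finVA TV u(1)])
            have sm: "(\<Sum>x\<in>T. exc x) = exc u + (\<Sum>x\<in>T-{u}. exc x)"
              using psubset.hyps u(1) by (simp add: sum.remove)
            have "int (sw R w' T) + int (Ext H w R) \<le> int (sw R w' (T-{u})) + int (Ext H w R)"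
              using val[OF TR] val[of "T-{u}"] TR sm excu rm sD[OF TR u(1)] by force
            then show ?thesis using IH by linarith
          qed
        qed
      qed
    qed
  qed
  have "int (Max (sw R w' ` F)) + int (Ext H w R) = int (Max (sw VA w ` F))"
  proof (rule antisym)
    have "Max (sw R w' ` F) \<in> sw R w' ` F" using finF neF by (intro Max_in) auto
    then obtain T where T: "T \<in> F" "Max (sw R w' ` F) = sw R w' T" by auto
    show "int (Max (sw R w' ` F)) + int (Ext H w R) \<le> int (Max (sw VA w ` F))"
      using key[of T] T by simp
  next
    have "Max (sw VA w ` F) \<in> sw VA w ` F" using finF neF by (intro Max_in) auto
    then obtain T where T: "T \<in> F" "Max (sw VA w ` F) = sw VA w T" by auto
    have TR: "T \<subseteq> R" using T by (simp add: F_def)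
    have "int (sw VA w T) \<le> int (sw R w' T) + int (Ext H w R)"
      using val[OF TR] sum_nonneg[of T exc] exc_nn by simp
    also have "\<dots> \<le> int (Max (sw R w' ` F)) + int (Ext H w R)"
      using Max_ge finF T by simp
    finally show "int (Max (sw VA w ` F)) \<le> int (Max (sw R w' ` F)) + int (Ext H w R)"
      using T by simp
  qed
  then show ?thesis using alpha_eq by (simp add: F_def VA_def)
qed

lemma sw_decomp:
  assumes fin: "finite V" and V: "V = A \<union> B \<union> C" and d: "A \<inter> B = {}" "A \<inter> C = {}" "B \<inter> C = {}"
    and SV: "S \<subseteq> V"
    and cz: "\<And>a b. a \<in> A \<Longrightarrow> b \<in> B \<Longrightarrow> w (Ord a b) = 0 \<and> w (Ord b a) = 0 \<and> w (Unord {a,b}) = 0"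
  shows "sw V w S + sw C w (S \<inter> C) = sw (A \<union> C) w (S \<inter> (A \<union> C)) + sw (B \<union> C) w (S \<inter> (B \<union> C))"
proof -
  define X where "X = A \<union> C"
  define Y where "Y = B \<union> C"
  have XY: "X \<inter> Y = C" using d by (auto simp: X_def Y_def)
  have fX: "finite X" "finite Y" "finite C" using fin V by (auto simp: X_def Y_def)
  have fS: "finite S" using fin SV finite_subset by blast
  have t1: "(\<Sum>u\<in>S. w (Vtx u)) + (\<Sum>u\<in>S \<inter> C. w (Vtx u))
      = (\<Sum>u\<in>S \<inter> X. w (Vtx u)) + (\<Sum>u\<in>S \<inter> Y. w (Vtx u))"
  proof -
    have "S \<inter> X \<union> S \<inter> Y = S" "S \<inter> X \<inter> (S \<inter> Y) = S \<inter> C" using SV V XY by (auto simp: X_def Y_def)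
    then show ?thesis using sum.union_inter[of "S \<inter> X" "S \<inter> Y" "\<lambda>u. w (Vtx u)"] fS by simp
  qed
  let ?g = "\<lambda>(u,v). w (Ord u v)"
  have t2: "(\<Sum>u\<in>S. \<Sum>v\<in>V - S. w (Ord u v)) + (\<Sum>u\<in>S \<inter> C. \<Sum>v\<in>C - S \<inter> C. w (Ord u v))
      = (\<Sum>u\<in>S \<inter> X. \<Sum>v\<in>X - S \<inter> X. w (Ord u v)) + (\<Sum>u\<in>S \<inter> Y. \<Sum>v\<in>Y - S \<inter> Y. w (Ord u v))"
  proof -
    have e1: "(S \<inter> X) \<times> (X - S \<inter> X) \<inter> (S \<inter> Y) \<times> (Y - S \<inter> Y) = (S \<inter> C) \<times> (C - S \<inter> C)"
      using XY by auto
    have fU: "finite ((S \<inter> X) \<times> (X - S \<inter> X))" "finite ((S \<inter> Y) \<times> (Y - S \<inter> Y))"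
      using fX fS by auto
    have "sum ?g ((S \<inter> X) \<times> (X - S \<inter> X) \<union> (S \<inter> Y) \<times> (Y - S \<inter> Y)) = sum ?g (S \<times> (V - S))"
    proof (rule sum.mono_neutral_left)
      show "finite (S \<times> (V - S))" using fS fin by auto
      show "(S \<inter> X) \<times> (X - S \<inter> X) \<union> (S \<inter> Y) \<times> (Y - S \<inter> Y) \<subseteq> S \<times> (V - S)"
        using V by (auto simp: X_def Y_def)
      show "\<forall>i\<in>S \<times> (V - S) - ((S \<inter> X) \<times> (X - S \<inter> X) \<union> (S \<inter> Y) \<times> (Y - S \<inter> Y)). ?g i = 0"
      proof
        fix i assume i: "i \<in> S \<times> (V - S) - ((S \<inter> X) \<times> (X - S \<inter> X) \<union> (S \<inter> Y) \<times> (Y - S \<inter> Y))"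
        obtain a b where ab: "i = (a,b)" by (cases i)
        have "(a \<in> A \<and> b \<in> B) \<or> (a \<in> B \<and> b \<in> A)"
          using i ab SV V by (auto simp: X_def Y_def)
        then show "?g i = 0" using cz ab by auto
      qed
    qed
    then have "sum ?g (S \<times> (V - S)) + sum ?g ((S \<inter> C) \<times> (C - S \<inter> C))
        = sum ?g ((S \<inter> X) \<times> (X - S \<inter> X)) + sum ?g ((S \<inter> Y) \<times> (Y - S \<inter> Y))"
      using sum.union_inter[OF fU, of ?g] e1 by simp
    then show ?thesis by (simp add: sum.cartesian_product)
  qed
  let ?h = "\<lambda>p. w (Unord p)"
  have t3: "(\<Sum>p\<in>pairs2 (V - S). ?h p) + (\<Sum>p\<in>pairs2 (C - S \<inter> C). ?h p)
      = (\<Sum>p\<in>pairs2 (X - S \<inter> X). ?h p) + (\<Sum>p\<in>pairs2 (Y - S \<inter> Y). ?h p)"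
  proof -
    have e1: "pairs2 (X - S \<inter> X) \<inter> pairs2 (Y - S \<inter> Y) = pairs2 (C - S \<inter> C)"
      using XY by (auto simp: pairs2_def)
    have fU: "finite (pairs2 (X - S \<inter> X))" "finite (pairs2 (Y - S \<inter> Y))"
      using fX by (auto intro: finite_pairs2)
    have "sum ?h (pairs2 (X - S \<inter> X) \<union> pairs2 (Y - S \<inter> Y)) = sum ?h (pairs2 (V - S))"
    proof (rule sum.mono_neutral_left)
      show "finite (pairs2 (V - S))" using fin by (auto intro: finite_pairs2)
      show "pairs2 (X - S \<inter> X) \<union> pairs2 (Y - S \<inter> Y) \<subseteq> pairs2 (V - S)"
        using V by (auto simp: X_def Y_def pairs2_def)
      show "\<forall>i\<in>pairs2 (V - S) - (pairs2 (X - S \<inter> X) \<union> pairs2 (Y - S \<inter> Y)). ?h i = 0"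
      proof
        fix p assume p: "p \<in> pairs2 (V - S) - (pairs2 (X - S \<inter> X) \<union> pairs2 (Y - S \<inter> Y))"
        then obtain a b where ab: "p = {a,b}" "a \<noteq> b" "a \<in> V - S" "b \<in> V - S"
          by (auto simp: pairs2_def card_2_iff)
        have nX: "\<not> p \<subseteq> X" and nY: "\<not> p \<subseteq> Y" using p ab by (auto simp: pairs2_def)
        have "(a \<in> A \<and> b \<in> B) \<or> (a \<in> B \<and> b \<in> A)"
          using nX nY ab V by (auto simp: X_def Y_def)
        then show "?h p = 0" using cz[of a b] cz[of b a] ab by (auto simp: insert_commute)
      qed
    qed
    then show ?thesis
      using sum.union_inter[OF fU, of ?h] e1 by simp
  qed
  have cx: "C - S \<inter> C = C - S" "X - S \<inter> X = X - S" "Y - S \<inter> Y = Y - S" by auto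
  show ?thesis
    using t1 t2 t3 unfolding sw_def X_def[symmetric] Y_def[symmetric] by simp
qed

lemma theta_sym: "theta G u v = theta G v u"
  by (simp add: theta_def insert_commute)

lemma sw_remove2:
  assumes "finite V" "T \<subseteq> V" "u \<in> T" "\<forall>v\<in>V-T. w (Ord u v) \<le> w (Unord {u,v})"
  shows "sw V w T \<le> sw V w (T-{u}) + w (Vtx u)"
proof -
  have "(\<Sum>v\<in>V-T. w (Ord u v)) \<le> (\<Sum>v\<in>V-T. w (Unord {u,v}))"
    using assms(4) by (intro sum_mono) auto
  then show ?thesis using sw_remove[OF assms(1-3), of w] by linarith
qed

lemma union_stable:
  assumes cp: "cut_partition G A B C"
    and T: "T \<subseteq> A \<union> C" "stable_set G T" and U: "U \<subseteq> B \<union> C" "stable_set G U"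
    and TU: "T \<inter> C = U \<inter> C"
  shows "stable_set G (T \<union> U) \<and> (T \<union> U) \<inter> (A \<union> C) = T \<and> (T \<union> U) \<inter> (B \<union> C) = U
         \<and> (T \<union> U) \<inter> C = T \<inter> C"
proof -
  have d: "A \<inter> B = {}" "A \<inter> C = {}" "B \<inter> C = {}" and ab: "\<forall>a\<in>A. \<forall>b\<in>B. theta G a b = -1"
    using cp by (auto simp: cut_partition_def)
  have st: "stable_set G (T \<union> U)"
    unfolding stable_set_def
  proof (intro conjI ballI impI)
    show "T \<union> U \<subseteq> verts G" using T U by (auto simp: stable_set_def)
  next
    fix x y assume xy: "x \<in> T \<union> U" "y \<in> T \<union> U" "x \<noteq> y"
    consider "x \<in> T" "y \<in> T" | "x \<in> U" "y \<in> U" | "x \<in> T" "x \<notin> U" "y \<in> U" "y \<notin> T"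
      | "x \<in> U" "x \<notin> T" "y \<in> T" "y \<notin> U" using xy by blast
    then show "theta G x y \<le> 0"
    proof cases
      case 1 then show ?thesis using T xy by (auto simp: stable_set_def)
    next
      case 2 then show ?thesis using U xy by (auto simp: stable_set_def)
    next
      case 3
      then have "x \<in> A" "y \<in> B" using T U TU by auto
      then show ?thesis using ab by auto
    next
      case 4
      then have "y \<in> A" "x \<in> B" using T U TU by auto
      then show ?thesis using ab theta_sym[of G x y] by auto
    qed
  qed
  moreover have "(T \<union> U) \<inter> (A \<union> C) = T" using T(1) U(1) TU d by blast
  moreover have "(T \<union> U) \<inter> (B \<union> C) = U" using T(1) U(1) TU d by blast
  moreover have "(T \<union> U) \<inter> C = T \<inter> C" using TU by blast
  ultimately show ?thesis by blast
qed

lemma stable_clique: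
  assumes "stable_set G S" "strong_clique G C"
  shows "S \<inter> C = {} \<or> (\<exists>c\<in>C. S \<inter> C = {c})"
proof (cases "S \<inter> C = {}")
  case False
  then obtain c where c: "c \<in> S \<inter> C" by blast
  have "S \<inter> C = {c}"
  proof (rule ccontr)
    assume "S \<inter> C \<noteq> {c}"
    then obtain d where "d \<in> S \<inter> C" "d \<noteq> c" using c by blast
    then show False using c assms by (fastforce simp: stable_set_def strong_clique_def)
  qed
  then show ?thesis using c by blast
qed simp

theorem lemma3p10:
  fixes G :: "'a trigraph" and w :: "'a delem \<Rightarrow> nat" and A B C :: "'a set"
    and GA GB :: "'a trigraph" and alphaA :: "'a set \<Rightarrow> int" and wB :: "'a delem \<Rightarrow> nat"
  assumes "trigraph G"
    and "weight_function G w"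
    and "clique_cutset G C"
    and "cut_partition G A B C"
    and "GA = induced G (A \<union> C)"
    and "GB = induced G (B \<union> C)"
    and "\<And>C'. C' \<subseteq> C \<Longrightarrow>
           alphaA C' = int (alpha_wt (Red GA w (A \<union> C'))) + int (Ext GA w (A \<union> C'))"
    and "\<And>p. wB p = (case p of
                         Vtx c \<Rightarrow> (if c \<in> C then nat (alphaA {c} - alphaA {}) else w p)
                       | _ \<Rightarrow> w p)"
  shows "(\<forall>c\<in>C. alphaA {c} - alphaA {} \<ge> 0) \<and> weight_function GB wB
         \<and> int (alpha G w) = alphaA {} + int (alpha GB wB)"
proof -
  note tg = assms(1) and wf = assms(2) and cc = assms(3) and cp = assms(4)
    and GAd = assms(5) and GBd = assms(6) and aA = assms(7) and wBd = assms(8)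
  define V where "V = verts G"
  have fin: "finite V" using tg by (simp add: trigraph_def V_def)
  have V: "V = A \<union> B \<union> C" and d: "A \<inter> B = {}" "A \<inter> C = {}" "B \<inter> C = {}"
    and ab: "\<forall>a\<in>A. \<forall>b\<in>B. theta G a b = -1"
    using cp by (auto simp: cut_partition_def V_def)
  have clq: "strong_clique G C" using cc by (simp add: clique_cutset_def)
  have C1: "\<And>u v. u \<in> C \<Longrightarrow> v \<in> C \<Longrightarrow> u \<noteq> v \<Longrightarrow> theta G u v = 1"
    using clq by (simp add: strong_clique_def)
  have wfe: "\<And>u v. u \<in> V \<Longrightarrow> v \<in> V \<Longrightarrow> u \<noteq> v \<Longrightarrow> theta G u v \<noteq> 0 \<Longrightarrow>
      w (Ord u v) = 0 \<and> w (Ord v u) = 0 \<and> w (Unord {u,v}) = 0"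
    using wf by (simp add: weight_function_def V_def)
  have wfl: "\<And>u v. u \<in> V \<Longrightarrow> v \<in> V \<Longrightarrow> u \<noteq> v \<Longrightarrow> w (Ord u v) \<le> w (Unord {u,v})"
    using wf by (simp add: weight_function_def V_def)
  have cz: "\<And>a b. a \<in> A \<Longrightarrow> b \<in> B \<Longrightarrow> w (Ord a b) = 0 \<and> w (Ord b a) = 0 \<and> w (Unord {a,b}) = 0"
  proof -
    fix a b assume "a \<in> A" "b \<in> B"
    then show "w (Ord a b) = 0 \<and> w (Ord b a) = 0 \<and> w (Unord {a,b}) = 0"
      using wfe[of a b] ab d V by auto
  qed
  have swC: "sw C w T = (\<Sum>u\<in>T. w (Vtx u))" if "T \<subseteq> C" for T
  proof -
    have "(\<Sum>u\<in>T. \<Sum>v\<in>C - T. w (Ord u v)) = 0"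
    proof (intro sum.neutral ballI)
      fix u v assume "u \<in> T" "v \<in> C - T"
      then have uv: "u \<in> C" "v \<in> C" "u \<noteq> v" using that by auto
      then show "w (Ord u v) = 0" using wfe[of u v] C1[of u v] V by auto
    qed
    moreover have "(\<Sum>p\<in>pairs2 (C - T). w (Unord p)) = 0"
    proof (intro sum.neutral ballI)
      fix p assume "p \<in> pairs2 (C - T)"
      then obtain a b where "p = {a,b}" "a \<noteq> b" "a \<in> C" "b \<in> C"
        by (auto simp: pairs2_def card_2_iff)
      then show "w (Unord p) = 0" using wfe[of a b] C1[of a b] V by auto
    qed
    ultimately show ?thesis by (simp add: sw_def)
  qed
  have VA: "verts GA = A \<union> C" and VB: "verts GB = B \<union> C"
    using V by (auto simp: GAd GBd verts_induced V_def)
  have wfGA: "weight_function GA w"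
    using wf unfolding weight_function_def GAd verts_induced theta_induced by auto
  define FA where "FA R = {T. stable_set G T \<and> T \<subseteq> R}" for R
  define MA where "MA R = Max (sw (A \<union> C) w ` FA R)" for R
  have finFA: "finite (FA R)" for R
    unfolding FA_def using fin V_def by (simp add: finite_stable)
  have neFA: "{} \<in> FA R" for R by (simp add: FA_def stable_set_def)
  have MAge: "T \<in> FA R \<Longrightarrow> sw (A \<union> C) w T \<le> MA R" for T R
    unfolding MA_def using finFA by simp
  have MAin: "\<exists>T\<in>FA R. MA R = sw (A \<union> C) w T" for R
  proof -
    have "MA R \<in> sw (A \<union> C) w ` FA R" unfolding MA_def using finFA neFA by (intro Max_in) auto
    then show ?thesis by auto
  qed
  have MAmono: "R1 \<subseteq> R2 \<Longrightarrow> MA R1 \<le> MA R2" for R1 R2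
    unfolding MA_def using finFA neFA by (intro Max_mono) (auto simp: FA_def)
  have aAe: "alphaA C' = int (MA (A \<union> C'))" if "C' \<subseteq> C" for C'
  proof -
    have fGA: "finite (verts GA)" using fin V VA by auto
    have R: "A \<union> C' \<subseteq> verts GA" using that VA by auto
    have "{T. stable_set GA T \<and> T \<subseteq> A \<union> C'} = FA (A \<union> C')"
      using that by (auto simp: FA_def GAd stable_induced)
    then show ?thesis using aA[OF that] red_alpha[OF fGA R wfGA] by (simp add: MA_def VA)
  qed
  have aA0: "alphaA {} = int (MA A)" using aAe[of "{}"] by simp
  have aAc: "c \<in> C \<Longrightarrow> alphaA {c} = int (MA (A \<union> {c}))" for c using aAe[of "{c}"] by simp
  have M0le: "MA A \<le> MA (A \<union> {c})" for c by (rule MAmono) auto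
  have conj1: "\<forall>c\<in>C. alphaA {c} - alphaA {} \<ge> 0"
    using aA0 aAc M0le by auto
  have wBV: "c \<in> C \<Longrightarrow> MA (A \<union> {c}) = MA A + wB (Vtx c)" for c
    using wBd[of "Vtx c"] aA0 aAc[of c] M0le[of c] by simp
  have wBV2: "u \<notin> C \<Longrightarrow> wB (Vtx u) = w (Vtx u)" for u using wBd[of "Vtx u"] by simp
  have wBO: "wB (Ord u v) = w (Ord u v)" "wB (Unord p) = w (Unord p)" for u v p
    using wBd[of "Ord u v"] wBd[of "Unord p"] by simp_all
  have conj2: "weight_function GB wB"
    using wf unfolding weight_function_def GBd verts_induced theta_induced wBO by auto
  have swB: "sw (B \<union> C) wB U + (\<Sum>u\<in>U \<inter> C. w (Vtx u)) = sw (B \<union> C) w U + (\<Sum>u\<in>U \<inter> C. wB (Vtx u))"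
    if "U \<subseteq> B \<union> C" for U
  proof -
    have fU: "finite U" using that fin V finite_subset by (metis sup_assoc sup_ge2 infinite_super)
    have s1: "(\<Sum>u\<in>U. f u) = (\<Sum>u\<in>U - U \<inter> C. f u) + (\<Sum>u\<in>U \<inter> C. f u)" for f :: "'a \<Rightarrow> nat"
      using fU by (simp add: sum.subset_diff)
    have s2: "(\<Sum>u\<in>U - U \<inter> C. wB (Vtx u)) = (\<Sum>u\<in>U - U \<inter> C. w (Vtx u))"
      by (rule sum.cong) (auto simp: wBV2)
    show ?thesis unfolding sw_def wBO using s1[of "\<lambda>u. wB (Vtx u)"] s1[of "\<lambda>u. w (Vtx u)"] s2 by simp
  qed
  have dec: "sw V w S + (\<Sum>u\<in>S \<inter> C. w (Vtx u)) = sw (A \<union> C) w (S \<inter> (A \<union> C)) + sw (B \<union> C) w (S \<inter> (B \<union> C))"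
    if "S \<subseteq> V" for S
    using sw_decomp[OF fin V d that cz] swC[of "S \<inter> C"] by simp
  define FB where "FB = {U. stable_set G U \<and> U \<subseteq> B \<union> C}"
  define aB where "aB = Max (sw (B \<union> C) wB ` FB)"
  have finFB: "finite FB" unfolding FB_def using fin V_def by (simp add: finite_stable)
  have neFB: "{} \<in> FB" by (simp add: FB_def stable_set_def)
  have aBe: "alpha GB wB = aB"
    unfolding alpha_def aB_def FB_def set_weight_sw VB unfolding GBd stable_induced by simp
  define FG where "FG = {S. stable_set G S}"
  have finFG: "finite FG" unfolding FG_def using fin V_def finite_stable[of G "\<lambda>_. True"] by simp
  have aGe: "alpha G w = Max (sw V w ` FG)"
    unfolding alpha_def FG_def set_weight_sw V_def by simp
  have le1: "alpha G w \<le> MA A + aB"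
    unfolding aGe
  proof (subst Max_le_iff)
    show "finite (sw V w ` FG)" using finFG by simp
    show "sw V w ` FG \<noteq> {}" by (auto simp: FG_def stable_set_def)
    show "\<forall>a\<in>sw V w ` FG. a \<le> MA A + aB"
    proof
      fix x assume "x \<in> sw V w ` FG"
      then obtain S where S: "stable_set G S" "x = sw V w S" by (auto simp: FG_def)
      have SV: "S \<subseteq> V" using S by (simp add: stable_set_def V_def)
      have SB: "S \<inter> (B \<union> C) \<in> FB" using S stable_mono[of G S] by (auto simp: FB_def)
      have aBge: "sw (B \<union> C) wB (S \<inter> (B \<union> C)) \<le> aB" unfolding aB_def using finFB SB by simp
      have SBC: "S \<inter> (B \<union> C) \<inter> C = S \<inter> C" by auto
      note dS = dec[OF SV] and sB = swB[of "S \<inter> (B \<union> C)", unfolded SBC]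
      consider "S \<inter> C = {}" | c where "c \<in> C" "S \<inter> C = {c}" using stable_clique[OF S(1) clq] by blast
      then show "x \<le> MA A + aB"
      proof cases
        case 1
        have "S \<inter> (A \<union> C) \<in> FA A" using S stable_mono[of G S] 1 by (auto simp: FA_def)
        then have "sw (A \<union> C) w (S \<inter> (A \<union> C)) \<le> MA A" by (rule MAge)
        then show ?thesis using dS sB aBge S(2) 1 by simp
      next
        case 2
        have "S \<inter> (A \<union> C) \<in> FA (A \<union> {c})" using S stable_mono[of G S] 2 by (auto simp: FA_def)
        then have "sw (A \<union> C) w (S \<inter> (A \<union> C)) \<le> MA (A \<union> {c})" by (rule MAge)
        then show ?thesis using dS sB aBge S(2) 2 wBV[OF 2(1)] by simp
      qed
    qed
  qed
  have le2: "MA A + aB \<le> alpha G w"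
  proof -
    have "aB \<in> sw (B \<union> C) wB ` FB" unfolding aB_def using finFB neFB by (intro Max_in) auto
    then obtain U where U: "stable_set G U" "U \<subseteq> B \<union> C" "aB = sw (B \<union> C) wB U"
      by (auto simp: FB_def)
    obtain T0 where T0: "stable_set G T0" "T0 \<subseteq> A" "MA A = sw (A \<union> C) w T0"
      using MAin[of A] by (auto simp: FA_def)
    have UC: "U \<inter> (B \<union> C) = U" "T0 \<inter> C = {}" using U T0 d by auto
    have T0V: "T0 \<subseteq> A \<union> C" using T0 by auto
    have "\<exists>S. stable_set G S \<and> MA A + aB \<le> sw V w S"
    proof -
      consider "U \<inter> C = {}" | c where "c \<in> C" "U \<inter> C = {c}" using stable_clique[OF U(1) clq] by blast
      then show ?thesis
      proof cases
        case 1
        have un: "stable_set G (T0 \<union> U) \<and> (T0 \<union> U) \<inter> (A \<union> C) = T0 \<and> (T0 \<union> U) \<inter> (B \<union> C) = U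
          \<and> (T0 \<union> U) \<inter> C = T0 \<inter> C"
          by (rule union_stable[OF cp T0V T0(1) U(2) U(1)]) (use 1 UC in simp)
        have "T0 \<union> U \<subseteq> V" using un by (simp add: stable_set_def V_def)
        from dec[OF this] un have "sw V w (T0 \<union> U) = sw (A \<union> C) w T0 + sw (B \<union> C) w U" using UC by simp
        moreover have "sw (B \<union> C) wB U = sw (B \<union> C) w U" using swB[OF U(2)] 1 by simp
        ultimately show ?thesis using un T0 U by auto
      next
        case 2
        obtain Tc where Tc: "stable_set G Tc" "Tc \<subseteq> A \<union> {c}" "MA (A \<union> {c}) = sw (A \<union> C) w Tc"
          using MAin[of "A \<union> {c}"] by (auto simp: FA_def)
        have sB: "sw (B \<union> C) wB U + w (Vtx c) = sw (B \<union> C) w U + wB (Vtx c)"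
          using swB[OF U(2)] 2 by simp
        show ?thesis
        proof (cases "c \<in> Tc")
          case True
          have TcC: "Tc \<inter> C = {c}" using Tc True 2 d by auto
          have TcV: "Tc \<subseteq> A \<union> C" using Tc 2 by auto
          have un: "stable_set G (Tc \<union> U) \<and> (Tc \<union> U) \<inter> (A \<union> C) = Tc \<and> (Tc \<union> U) \<inter> (B \<union> C) = U
            \<and> (Tc \<union> U) \<inter> C = Tc \<inter> C"
            by (rule union_stable[OF cp TcV Tc(1) U(2) U(1)]) (use 2 TcC in simp)
          have "Tc \<union> U \<subseteq> V" using un by (simp add: stable_set_def V_def)
          from dec[OF this] un TcC have "sw V w (Tc \<union> U) + w (Vtx c) = sw (A \<union> C) w Tc + sw (B \<union> C) w U"
            by simp
          then have "MA A + aB \<le> sw V w (Tc \<union> U)" using sB U(3) Tc(3) wBV[OF 2(1)] by simp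
          then show ?thesis using un by auto
        next
          case False
          then have "Tc \<in> FA A" using Tc by (auto simp: FA_def)
          then have "MA (A \<union> {c}) \<le> MA A" using Tc(3) MAge by simp
          then have wc0: "wB (Vtx c) = 0" using wBV[OF 2(1)] by simp
          define U' where "U' = U - {c}"
          have U'C: "U' \<inter> C = {}" using 2 by (auto simp: U'_def)
          have U'2: "U' \<subseteq> B \<union> C" "stable_set G U'"
            using U(2) by (auto simp: U'_def intro: stable_mono[OF U(1)])
          have un: "stable_set G (T0 \<union> U') \<and> (T0 \<union> U') \<inter> (A \<union> C) = T0 \<and> (T0 \<union> U') \<inter> (B \<union> C) = U'
            \<and> (T0 \<union> U') \<inter> C = T0 \<inter> C"
            by (rule union_stable[OF cp T0V T0(1) U'2(1) U'2(2)]) (simp add: U'C UC(2))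
          have "T0 \<union> U' \<subseteq> V" using un by (simp add: stable_set_def V_def)
          from dec[OF this] un UC have e: "sw V w (T0 \<union> U') = sw (A \<union> C) w T0 + sw (B \<union> C) w U'"
            by simp
          have fBC: "finite (B \<union> C)" using fin V by (metis finite_Un)
          have cU: "c \<in> U" using 2 by auto
          have "sw (B \<union> C) w U \<le> sw (B \<union> C) w U' + w (Vtx c)"
            unfolding U'_def
          proof (rule sw_remove2[OF fBC U(2) cU])
            show "\<forall>v\<in>B \<union> C - U. w (Ord c v) \<le> w (Unord {c, v})"
            proof
              fix v assume v: "v \<in> B \<union> C - U"
              then have h: "v \<in> V" "c \<in> V" "c \<noteq> v" using cU U(2) V by auto
              show "w (Ord c v) \<le> w (Unord {c, v})" by (rule wfl[OF h(2) h(1) h(3)])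
            qed
          qed
          then have "MA A + aB \<le> sw V w (T0 \<union> U')" using e sB wc0 U(3) T0(3) by simp
          then show ?thesis using un by auto
        qed
      qed
    qed
    then obtain S where S: "stable_set G S" "MA A + aB \<le> sw V w S" by blast
    have "sw V w S \<le> Max (sw V w ` FG)" using finFG S by (simp add: FG_def)
    then show ?thesis using S aGe by simp
  qed
  have "alpha G w = MA A + aB" using le1 le2 by simp
  then have conj3: "int (alpha G w) = alphaA {} + int (alpha GB wB)" using aA0 aBe by simp
  show ?thesis using conj1 conj2 conj3 by blast
qed

end
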